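(* Let $\mathcal{B}=\langle V,F,E\rangle$ be a finite bipartite graph and $W\subseteq V$ such that the subgraph of $\mathcal{B}$ induced by $(V\cup F)\setminus W$ is self-contained. Let $S=S_F\cup S_V$ be a cluster of the causal ordering graph $\mathrm{CO}(\mathcal{B})$ with $S\cap W=\emptyset$, where $S_F=S\cap F$ and $S_V=S\cap V$, and consider the perfect intervention $\mathrm{do}(S_F,S_V)$. Then the subgraph of $\mathcal{B}_{\mathrm{do}(S_F,S_V)}$ induced by $(V\cup F)\setminus W$ is self-contained.
   Context: $\mathrm{adj}_{\mathcal{B}}(X)$ is the set of vertices adjacent to some vertex of $X$. $F'\subseteq F$ is self-contained if $|F'|=|\mathrm{adj}_{\mathcal{B}}(F')|$ and $|F''|\le|\mathrm{adj}_{\mathcal{B}}(F'')|$ for all $F''\subseteq F'$; a bipartite graph is self-contained if both sides have equal size and the constraint side is self-contained; minimal self-contained = non-empty self-contained with no non-empty strict self-contained subset. Causal ordering graph $\mathrm{CO}(\mathcal{B})=\langle\mathcal{V},\mathcal{E}\rangle$ (Algorithm 1): start with $\mathcal{E}=\emptyset$, $\mathcal{V}=\{\{w\}:w\in W\}$, $\mathcal{B}'=\langle V',F',E'\rangle$ the subgraph induced by $(V\setminus W)\cup F$; while $\mathcal{B}'$ is non-null: choose a minimal self-contained set $S'_F$ of $\mathcal{B}'$, let $C=S'_F\cup\mathrm{adj}_{\mathcal{B}'}(S'_F)$, add $C$ to $\mathcal{V}$, add $v\to C$ for each $v\in\mathrm{adj}_{\mathcal{B}}(S'_F)\setminus\mathrm{adj}_{\mathcal{B}'}(S'_F)$,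 and replace $\mathcal{B}'$ by its subgraph induced by $(V'\cup F')\setminus C$. For such a cluster $S$ with $S\cap W=\emptyset$ one has $|S\cap F|=|S\cap V|=n$. Perfect intervention on the bipartite graph: enumerate $S_F=(f_1,\dots,f_n)$ and $S_V=(v_1,\dots,v_n)$; $\mathcal{B}_{\mathrm{do}(S_F,S_V)}=\langle V,F,E'\rangle$ where $E'$ consists of all edges of $E$ not incident to any $f_i$, together with the edges $(v_i-f_i)$, $i=1,\dots,n$. *)

theory Defs
  imports Main
begin

(* A bipartite graph <V,F,E> is represented by two disjoint vertex sets V, F
   and an edge set E \<subseteq> V \<times> F; an edge (v,f) is the edge v - f. *)

definition adj :: "('a \<times> 'a) set \<Rightarrow> 'a set \<Rightarrow> 'a set" where
  "adj E X = {y. \<exists>x\<in>X. (x, y) \<in> E \<or> (y, x) \<in> E}"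

definition induced_edges :: "('a \<times> 'a) set \<Rightarrow> 'a set \<Rightarrow> ('a \<times> 'a) set" where
  "induced_edges E U = E \<inter> (U \<times> U)"

definition self_contained_set :: "'a set \<Rightarrow> ('a \<times> 'a) set \<Rightarrow> 'a set \<Rightarrow> bool" where
  "self_contained_set F E F' \<longleftrightarrow>
     F' \<subseteq> F \<and> card F' = card (adj E F') \<and>
     (\<forall>F''. F'' \<subseteq> F' \<longrightarrow> card F'' \<le> card (adj E F''))"

definition self_contained_graph :: "'a set \<Rightarrow> 'a set \<Rightarrow> ('a \<times> 'a) set \<Rightarrow> bool" where
  "self_contained_graph V F E \<longleftrightarrow> card V = card F \<and> self_contained_set F E F"

definition minimal_self_contained :: "'a set \<Rightarrow> ('a \<times> 'a) set \<Rightarrow> 'a set \<Rightarrow> bool" where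
  "minimal_self_contained F E S \<longleftrightarrow>
     S \<noteq> {} \<and> self_contained_set F E S \<and>
     \<not> (\<exists>S'. S' \<noteq> {} \<and> S' \<subset> S \<and> self_contained_set F E S')"

(* Reachable states of Algorithm 1: the current graph B' is the subgraph of B
   induced by the vertex set U. *)
inductive co_state :: "'a set \<Rightarrow> 'a set \<Rightarrow> ('a \<times> 'a) set \<Rightarrow> 'a set \<Rightarrow> 'a set \<Rightarrow> bool"
  for V F E W where
  init: "co_state V F E W ((V - W) \<union> F)"
| step: "\<lbrakk> co_state V F E W U; U \<noteq> {};
          minimal_self_contained (F \<inter> U) (induced_edges E U) SF \<rbrakk>
        \<Longrightarrow> co_state V F E W (U - (SF \<union> adj (induced_edges E U) SF))"

(* C is a cluster (vertex) of the causal ordering graph CO(B) (for some run of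
   Algorithm 1): either a singleton {w}, w \<in> W, or a cluster
   S'_F \<union> adj_{B'}(S'_F) added in some iteration. *)
definition co_cluster :: "'a set \<Rightarrow> 'a set \<Rightarrow> ('a \<times> 'a) set \<Rightarrow> 'a set \<Rightarrow> 'a set \<Rightarrow> bool" where
  "co_cluster V F E W C \<longleftrightarrow>
     (\<exists>w\<in>W. C = {w}) \<or>
     (\<exists>U SF. co_state V F E W U \<and> U \<noteq> {} \<and>
        minimal_self_contained (F \<inter> U) (induced_edges E U) SF \<and>
        C = SF \<union> adj (induced_edges E U) SF)"

(* edges of B_do(S_F,S_V), where the enumeration pairs f with \<sigma> f *)
definition do_edges :: "('a \<times> 'a) set \<Rightarrow> 'a set \<Rightarrow> ('a \<Rightarrow> 'a) \<Rightarrow> ('a \<times> 'a) set" where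
  "do_edges E SF \<sigma> = {e \<in> E. snd e \<notin> SF} \<union> {(\<sigma> f, f) | f. f \<in> SF}"

end

theory Submission
  imports Defs
begin

lemma adj_finite: "finite E \<Longrightarrow> finite (adj E X)"
proof -
  assume "finite E"
  have "adj E X \<subseteq> fst ` E \<union> snd ` E" unfolding adj_def by force
  then show ?thesis using \<open>finite E\<close> by (meson finite_Un finite_imageI finite_subset)
qed

lemma adj_mono_E: "E1 \<subseteq> E2 \<Longrightarrow> X \<subseteq> Y \<Longrightarrow> adj E1 X \<subseteq> adj E2 Y"
  unfolding adj_def by blast

lemma Edisj: "E \<subseteq> V \<times> F \<Longrightarrow> V \<inter> F = {} \<Longrightarrow> (a,b) \<in> E \<Longrightarrow> a \<in> V \<and> b \<in> F \<and> a \<notin> F \<and> b \<notin> V"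
  by blast

lemma hall_step:
  assumes EVF: "E \<subseteq> V \<times> F" and disj: "V \<inter> F = {}" and fV: "finite V" and fF: "finite F"
    and hall: "\<forall>B. B \<subseteq> F \<inter> U \<longrightarrow> card B \<le> card (adj (induced_edges E U) B)"
    and sc: "self_contained_set (F \<inter> U) (induced_edges E U) SF"
  shows "\<forall>B. B \<subseteq> F \<inter> (U - (SF \<union> adj (induced_edges E U) SF)) \<longrightarrow>
           card B \<le> card (adj (induced_edges E (U - (SF \<union> adj (induced_edges E U) SF))) B)"
proof (intro allI impI)
  fix B
  define N where "N = adj (induced_edges E U) SF"
  define U' where "U' = U - (SF \<union> N)"
  assume B: "B \<subseteq> F \<inter> (U - (SF \<union> adj (induced_edges E U) SF))"
  hence B': "B \<subseteq> F \<inter> U'" unfolding U'_def N_def by blast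
  have finE: "finite E" using EVF fV fF by (meson finite_SigmaI finite_subset)
  have fin: "finite (induced_edges E Z)" for Z unfolding induced_edges_def using finE by simp
  have SF: "SF \<subseteq> F \<inter> U" "card SF = card N" using sc unfolding self_contained_set_def N_def by auto
  have finF': "finite (F \<inter> U)" using fF by simp
  have finSF: "finite SF" using SF finF' finite_subset by blast
  have finB: "finite B" using B' fF finite_subset by blast
  have dSB: "SF \<inter> B = {}" using B' unfolding U'_def by blast
  have "card SF + card B = card (SF \<union> B)" using finSF finB dSB by (simp add: card_Un_disjoint)
  also have "\<dots> \<le> card (adj (induced_edges E U) (SF \<union> B))"
  proof -
    have "SF \<union> B \<subseteq> F \<inter> U" using SF(1) B' unfolding U'_def by blast
    then show ?thesis by (rule hall[rule_format])
  qed
  also have "adj (induced_edges E U) (SF \<union> B) \<subseteq> N \<union> adj (induced_edges E U') B"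
  proof
    fix y assume "y \<in> adj (induced_edges E U) (SF \<union> B)"
    then obtain x where x: "x \<in> SF \<union> B" and e: "(x,y) \<in> induced_edges E U \<or> (y,x) \<in> induced_edges E U"
      unfolding adj_def by blast
    show "y \<in> N \<union> adj (induced_edges E U') B"
    proof (cases "x \<in> SF")
      case True then show ?thesis using e unfolding N_def adj_def by blast
    next
      case False
      hence xB: "x \<in> B" using x by blast
      have xF: "x \<in> F" using xB B' by blast
      have nxy: "(x,y) \<notin> E" using Edisj[OF EVF disj, of x y] xF by blast
      have yx1: "(y,x) \<in> E" "y \<in> U" using e nxy unfolding induced_edges_def by blast+
      have yx: "(y,x) \<in> E" "y \<in> U" "y \<in> V" using yx1 Edisj[OF EVF disj yx1(1)] by blast+
      show ?thesis
      proof (cases "y \<in> N")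
        case True then show ?thesis by blast
      next
        case False
        have "y \<notin> SF" using yx SF disj by blast
        hence "y \<in> U'" using False yx unfolding U'_def by blast
        hence "(y,x) \<in> induced_edges E U'" using yx xB B' unfolding induced_edges_def by blast
        then show ?thesis using xB unfolding adj_def by blast
      qed
    qed
  qed
  hence "card (adj (induced_edges E U) (SF \<union> B)) \<le> card (N \<union> adj (induced_edges E U') B)"
    unfolding N_def by (intro card_mono finite_UnI adj_finite fin)
  also have "\<dots> \<le> card N + card (adj (induced_edges E U') B)" by (rule card_Un_le)
  finally show "card B \<le> card (adj (induced_edges E (U - (SF \<union> adj (induced_edges E U) SF))) B)"
    using SF(2) unfolding U'_def N_def by simp
qed

lemma co_inv:
  assumes "co_state V F E W U"
    and EVF: "E \<subseteq> V \<times> F" and disj: "V \<inter> F = {}" and fV: "finite V" and fF: "finite F"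
    and hall0: "\<forall>B. B \<subseteq> F \<longrightarrow> card B \<le> card (adj (induced_edges E ((V \<union> F) - W)) B)"
    and WV: "W \<subseteq> V"
  shows "U \<subseteq> (V - W) \<union> F \<and> (\<forall>v f. (v,f) \<in> E \<longrightarrow> f \<notin> U \<longrightarrow> v \<notin> U) \<and>
         (\<forall>B. B \<subseteq> F \<inter> U \<longrightarrow> card B \<le> card (adj (induced_edges E U) B))"
  using assms(1)
proof (induction rule: co_state.induct)
  case init
  have "(V - W) \<union> F = (V \<union> F) - W" using WV disj by blast
  have m: "\<forall>v f. (v,f) \<in> E \<longrightarrow> f \<notin> (V - W) \<union> F \<longrightarrow> v \<notin> (V - W) \<union> F"
    using Edisj[OF EVF disj] by blast
  have h: "\<forall>B. B \<subseteq> F \<inter> ((V - W) \<union> F) \<longrightarrow> card B \<le> card (adj (induced_edges E ((V - W) \<union> F)) B)"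
    using hall0 \<open>(V - W) \<union> F = (V \<union> F) - W\<close> by simp
  show ?case using m h by (intro conjI subset_refl)
next
  case (step U SF)
  have sc: "self_contained_set (F \<inter> U) (induced_edges E U) SF"
    using step.hyps(3) unfolding minimal_self_contained_def by blast
  have h: "\<forall>B. B \<subseteq> F \<inter> (U - (SF \<union> adj (induced_edges E U) SF)) \<longrightarrow>
           card B \<le> card (adj (induced_edges E (U - (SF \<union> adj (induced_edges E U) SF))) B)"
    using hall_step[OF EVF disj fV fF _ sc] step.IH by blast
  have SFU: "SF \<subseteq> U" using sc unfolding self_contained_set_def by blast
  have "\<forall>v f. (v,f) \<in> E \<longrightarrow> f \<notin> U - (SF \<union> adj (induced_edges E U) SF) \<longrightarrow>
      v \<notin> U - (SF \<union> adj (induced_edges E U) SF)"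
  proof (intro allI impI)
    fix v f assume e: "(v,f) \<in> E" and f: "f \<notin> U - (SF \<union> adj (induced_edges E U) SF)"
    show "v \<notin> U - (SF \<union> adj (induced_edges E U) SF)"
    proof
      assume v: "v \<in> U - (SF \<union> adj (induced_edges E U) SF)"
      show False
      proof (cases "f \<in> U")
        case False then show False using step.IH e v by blast
      next
        case True
        then have "f \<in> SF \<union> adj (induced_edges E U) SF" using f by blast
        moreover have "f \<notin> adj (induced_edges E U) SF"
        proof
          assume "f \<in> adj (induced_edges E U) SF"
          then obtain x where x: "x \<in> SF" "(x,f) \<in> E \<or> (f,x) \<in> E"
            unfolding adj_def induced_edges_def by blast
          have "x \<in> F" using x(1) SFU sc unfolding self_contained_set_def by blast
          have "f \<in> F" using Edisj[OF EVF disj e] by blast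
          show False using x(2) Edisj[OF EVF disj, of x f] Edisj[OF EVF disj, of f x] \<open>x \<in> F\<close> \<open>f \<in> F\<close> by blast
        qed
        ultimately have "f \<in> SF" by blast
        then have "v \<in> adj (induced_edges E U) SF" using e v True
          unfolding adj_def induced_edges_def by blast
        then show False using v by blast
      qed
    qed
  qed
  moreover have "U - (SF \<union> adj (induced_edges E U) SF) \<subseteq> (V - W) \<union> F" using step.IH by blast
  ultimately show ?case using h by (intro conjI)
qed

theorem lemma22:
  fixes V F W S :: "'a set" and E :: "('a \<times> 'a) set" and \<sigma> :: "'a \<Rightarrow> 'a"
  assumes "finite V" and "finite F" and "V \<inter> F = {}" and "E \<subseteq> V \<times> F"
    and "W \<subseteq> V"
    and "self_contained_graph (V - W) F (induced_edges E ((V \<union> F) - W))"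
    and "co_cluster V F E W S" and "S \<inter> W = {}"
    and "bij_betw \<sigma> (S \<inter> F) (S \<inter> V)"
  shows "self_contained_graph (V - W) F
           (induced_edges (do_edges E (S \<inter> F) \<sigma>) ((V \<union> F) - W))"
proof -
  note fV = assms(1) and fF = assms(2) and disj = assms(3) and EVF = assms(4) and WV = assms(5)
  define U0 where "U0 = (V \<union> F) - W"
  have U0': "(V - W) \<union> F = U0" using WV disj unfolding U0_def by blast
  have finE: "finite E" using EVF fV fF by (meson finite_SigmaI finite_subset)
  have cardVF: "card (V - W) = card F" and hall0: "\<forall>B. B \<subseteq> F \<longrightarrow> card B \<le> card (adj (induced_edges E U0) B)"
    using assms(6) unfolding self_contained_graph_def self_contained_set_def U0_def by auto
  obtain U SF where st: "co_state V F E W U" and msc: "minimal_self_contained (F \<inter> U) (induced_edges E U) SF"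
    and Sdef: "S = SF \<union> adj (induced_edges E U) SF"
    using assms(7) assms(8) unfolding co_cluster_def by blast
  define N where "N = adj (induced_edges E U) SF"
  define U' where "U' = U - (SF \<union> N)"
  have sc: "self_contained_set (F \<inter> U) (induced_edges E U) SF"
    using msc unfolding minimal_self_contained_def by blast
  have SFU: "SF \<subseteq> F \<inter> U" using sc unfolding self_contained_set_def by blast
  have NV: "N \<subseteq> V \<inter> U"
  proof
    fix y assume "y \<in> N"
    then obtain x where x: "x \<in> SF" "(x,y) \<in> induced_edges E U \<or> (y,x) \<in> induced_edges E U"
      unfolding N_def adj_def by blast
    have xF: "x \<in> F" using x(1) SFU by blast
    have "(x,y) \<notin> E" using Edisj[OF EVF disj, of x y] xF by blast
    then have yx: "(y,x) \<in> E" "y \<in> U" using x(2) unfolding induced_edges_def by blast+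
    then show "y \<in> V \<inter> U" using Edisj[OF EVF disj yx(1)] by blast
  qed
  have SF_eq: "S \<inter> F = SF" using Sdef NV SFU disj unfolding N_def by blast
  have SV_eq: "S \<inter> V = N" using Sdef NV SFU disj unfolding N_def by blast
  have bij: "bij_betw \<sigma> SF N" using assms(9) SF_eq SV_eq by simp
  have hall0': "\<forall>B. B \<subseteq> F \<longrightarrow> card B \<le> card (adj (induced_edges E ((V \<union> F) - W)) B)"
    using hall0 unfolding U0_def .
  note ci = co_inv[OF st EVF disj fV fF hall0' WV]
  have inv: "U \<subseteq> U0" "\<forall>v f. (v,f) \<in> E \<longrightarrow> f \<notin> U \<longrightarrow> v \<notin> U"
    "\<forall>B. B \<subseteq> F \<inter> U \<longrightarrow> card B \<le> card (adj (induced_edges E U) B)"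
    using ci U0' by simp_all
  have hallU': "\<forall>B. B \<subseteq> F \<inter> U' \<longrightarrow> card B \<le> card (adj (induced_edges E U') B)"
    using hall_step[OF EVF disj fV fF inv(3) sc] unfolding U'_def N_def by blast
  define E2 where "E2 = induced_edges (do_edges E SF \<sigma>) U0"
  have finSF: "finite SF" using SFU fF finite_subset by blast
  have finE2: "finite E2"
  proof -
    have "E2 \<subseteq> E \<union> (\<lambda>f. (\<sigma> f, f)) ` SF" unfolding E2_def induced_edges_def do_edges_def by blast
    then show ?thesis using finE finSF by (meson finite_Un finite_imageI finite_subset)
  qed
  have finind: "finite (induced_edges E Z)" for Z unfolding induced_edges_def using finE by simp
  have hall2: "\<forall>X. X \<subseteq> F \<longrightarrow> card X \<le> card (adj E2 X)"
  proof (intro allI impI)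
    fix X assume XF: "X \<subseteq> F"
    define A where "A = X \<inter> SF"
    define B1 where "B1 = X - U"
    define B2 where "B2 = X \<inter> U - SF"
    have finX: "finite X" using XF fF finite_subset by blast
    have Xeq: "X = A \<union> B1 \<union> B2" unfolding A_def B1_def B2_def using SFU by blast
    have finA: "finite A" "finite B1" "finite B2" using finX unfolding A_def B1_def B2_def by auto
    have d1: "A \<inter> B1 = {}" using SFU unfolding A_def B1_def by blast
    have d2: "(A \<union> B1) \<inter> B2 = {}" unfolding A_def B1_def B2_def by blast
    have c1: "card (A \<union> B1) = card A + card B1" using card_Un_disjoint[OF finA(1,2) d1] .
    have c2: "card (A \<union> B1 \<union> B2) = card (A \<union> B1) + card B2"
      using card_Un_disjoint[OF _ finA(3) d2] finA by blast
    have cX: "card X = card A + card B1 + card B2" using Xeq c1 c2 by simp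
    define P where "P = \<sigma> ` A"
    define Q where "Q = adj (induced_edges E U0) B1"
    define R where "R = adj (induced_edges E U') B2"
    have PN: "P \<subseteq> N" using bij unfolding P_def A_def bij_betw_def by blast
    have injA: "inj_on \<sigma> A" using bij unfolding bij_betw_def A_def by (meson inj_on_subset inf_le2)
    have cP: "card P = card A" unfolding P_def by (rule card_image[OF injA])
    have cQ: "card B1 \<le> card Q" using hall0 XF unfolding Q_def B1_def by (meson Diff_subset order_trans)
    have B2s: "B2 \<subseteq> F \<inter> U'" using XF NV disj unfolding B2_def U'_def by blast
    have cR: "card B2 \<le> card R" using hallU' B2s unfolding R_def by blast
    have QnU: "Q \<inter> U = {}"
    proof -
      { fix y assume "y \<in> Q" "y \<in> U"
        then obtain x where x: "x \<in> B1" "(x,y) \<in> E \<or> (y,x) \<in> E"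
          unfolding Q_def adj_def induced_edges_def by blast
        moreover have "(x,y) \<notin> E" using Edisj[OF EVF disj, of x y] x(1) XF unfolding B1_def by blast
        ultimately have "(y,x) \<in> E" by blast
        then have False using inv(2) x \<open>y \<in> U\<close> unfolding B1_def by blast }
      then show ?thesis by blast
    qed
    have RU': "R \<subseteq> U'" unfolding R_def adj_def induced_edges_def by blast
    have PU': "P \<inter> U' = {}" using PN unfolding U'_def by blast
    have PU: "P \<subseteq> U" using PN NV by blast
    have finQ: "finite Q" unfolding Q_def by (rule adj_finite[OF finind])
    have finR: "finite R" unfolding R_def by (rule adj_finite[OF finind])
    have finP: "finite P" unfolding P_def A_def using finSF by simp
    have "card (P \<union> Q \<union> R) = card P + card Q + card R"
    proof -
      have "card (P \<union> Q \<union> R) = card (P \<union> Q) + card R"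
        using finP finQ finR QnU RU' PU' U'_def by (intro card_Un_disjoint) auto
      also have "card (P \<union> Q) = card P + card Q"
        using finP finQ QnU PU by (intro card_Un_disjoint) auto
      finally show ?thesis .
    qed
    moreover have "P \<union> Q \<union> R \<subseteq> adj E2 X"
    proof (intro Un_least)
      show "P \<subseteq> adj E2 X"
      proof
        fix y assume "y \<in> P"
        then obtain f where f: "f \<in> A" "y = \<sigma> f" unfolding P_def by blast
        have "y \<in> U0" using \<open>y \<in> P\<close> PU inv(1) by blast
        moreover have "f \<in> U0" using f XF U0' unfolding A_def by blast
        moreover have "f \<in> SF" using f unfolding A_def by blast
        ultimately have "(y,f) \<in> E2" using f unfolding E2_def induced_edges_def do_edges_def by blast
        then show "y \<in> adj E2 X" using f unfolding adj_def A_def by blast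
      qed
    next
      show "Q \<subseteq> adj E2 X"
      proof
        fix y assume "y \<in> Q"
        then obtain x where x: "x \<in> B1" "(x,y) \<in> induced_edges E U0 \<or> (y,x) \<in> induced_edges E U0"
          unfolding Q_def adj_def by blast
        moreover have "(x,y) \<notin> E" using Edisj[OF EVF disj, of x y] x(1) XF unfolding B1_def by blast
        ultimately have "(y,x) \<in> induced_edges E U0" unfolding induced_edges_def by blast
        moreover have "x \<notin> SF" using x SFU unfolding B1_def by blast
        ultimately have "(y,x) \<in> E2" unfolding E2_def induced_edges_def do_edges_def by auto
        then show "y \<in> adj E2 X" using x unfolding adj_def B1_def by blast
      qed
    next
      show "R \<subseteq> adj E2 X"
      proof
        fix y assume "y \<in> R"
        then obtain x where x: "x \<in> B2" "(x,y) \<in> induced_edges E U' \<or> (y,x) \<in> induced_edges E U'"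
          unfolding R_def adj_def by blast
        moreover have "(x,y) \<notin> E" using Edisj[OF EVF disj, of x y] x(1) XF unfolding B2_def by blast
        ultimately have "(y,x) \<in> induced_edges E U'" unfolding induced_edges_def by blast
        moreover have "x \<notin> SF" using x unfolding B2_def by blast
        moreover have "U' \<subseteq> U0" using inv(1) unfolding U'_def by blast
        ultimately have "(y,x) \<in> E2" unfolding E2_def induced_edges_def do_edges_def by auto
        then show "y \<in> adj E2 X" using x unfolding adj_def B2_def by blast
      qed
    qed
    hence "card (P \<union> Q \<union> R) \<le> card (adj E2 X)" using adj_finite[OF finE2] by (rule card_mono[rotated])
    ultimately show "card X \<le> card (adj E2 X)" using cX cP cQ cR by linarith
  qed
  have "adj E2 F \<subseteq> V - W"
  proof
    fix y assume "y \<in> adj E2 F"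
    then obtain x where x: "x \<in> F" "(x,y) \<in> E2 \<or> (y,x) \<in> E2" unfolding adj_def by blast
    have fstV: "fst e \<in> V" if "e \<in> E2" for e
    proof -
      have "e \<in> do_edges E SF \<sigma>" using that unfolding E2_def induced_edges_def by blast
      then consider "e \<in> E" | f where "f \<in> SF" "e = (\<sigma> f, f)" unfolding do_edges_def by blast
      then show ?thesis
      proof cases
        case 1 then show ?thesis using EVF by auto
      next
        case (2 f)
        then have "\<sigma> f \<in> N" using bij unfolding bij_betw_def by blast
        then show ?thesis using 2 NV by auto
      qed
    qed
    have "(y,x) \<in> E2" using x fstV disj by force
    then have "y \<in> V" "y \<in> U0" using fstV unfolding E2_def induced_edges_def by force+
    then show "y \<in> V - W" unfolding U0_def by blast
  qed
  then have "card (adj E2 F) \<le> card (V - W)" using fV by (intro card_mono) auto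
  moreover have "card F \<le> card (adj E2 F)" using hall2 by blast
  ultimately have "card F = card (adj E2 F)" using cardVF by linarith
  moreover have "induced_edges (do_edges E (S \<inter> F) \<sigma>) ((V \<union> F) - W) = E2"
    unfolding E2_def U0_def SF_eq ..
  ultimately show ?thesis using cardVF hall2
    unfolding self_contained_graph_def self_contained_set_def by (intro conjI) simp_all
qed

end
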